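(* Fix $p\in(0,1)$. Under the Alternating Path Randomized Design with parameter $p$, for every component $\mathcal{P}_i=(v_{i,1},\dots,v_{i,k(i)+1})$ of the decomposition of the disagreement set and every $j\in\{1,\dots,k(i)\}$, \[\mathbb{P}(W_{i,j}=1)=\begin{cases}\dfrac{1-(-p)^{j-1}}{(1+p)^2}, & \text{if }\mathcal{P}_i\text{ is a cycle and } j=k(i),\\[2mm] \dfrac{p}{p+1}, & \text{otherwise.}\end{cases}\]
   Context: Setting: $2N$ agents; $\mathbb{M}^t,\mathbb{M}^c$ are one-to-one matchings (sets of unordered pairs of distinct agents, each agent in at most one pair). The disagreement set $\triangle\mathbb{M}^{(t,c)}=(\mathbb{M}^t\cup\mathbb{M}^c)\setminus(\mathbb{M}^t\cap\mathbb{M}^c)$, viewed as a graph, has connected components $\mathcal{P}_1,\dots,\mathcal{P}_m$, each of which is an alternating path or alternating cycle: a sequence of agents $(v_{i,1},\dots,v_{i,k(i)+1})$ whose consecutive pairs $e_{i,j}=(v_{i,j},v_{i,j+1})$, $j=1,\dots,k(i)$, are the edges of the component, alternating between $\mathbb{M}^t\setminus\mathbb{M}^c$ and $\mathbb{M}^c\setminus\mathbb{M}^t$; it is a cycle if $v_{i,1}=v_{i,k(i)+1}$ and a path otherwise (each component is listed in a fixed orientation and starting point). Alternating Path Randomized Design with parameter $p$: it produces indicators $W_{i,j}\in\{0,1\}$ (edge $e_{i,j}$ is realized iff $W_{i,j}=1$), independently across components $i$. Within $\mathcal{P}_i$: $\mathbb{P}(W_{i,1}=1)=p/(1+p)$;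 for $2\le j\le k(i)$ if $\mathcal{P}_i$ is a path, and for $2\le j\le k(i)-1$ if $\mathcal{P}_i$ is a cycle, conditionally on $W_{i,1},\dots,W_{i,j-1}$ we have $W_{i,j}=1$ with probability $p$ if $W_{i,j-1}=0$ and $W_{i,j}=0$ if $W_{i,j-1}=1$; if $\mathcal{P}_i$ is a cycle, the last indicator is deterministic given the others: $W_{i,k(i)}=1$ if $W_{i,1}=0$ and $W_{i,k(i)-1}=0$, and $W_{i,k(i)}=0$ otherwise. *)

theory Defs
  imports "HOL-Probability.Probability"
begin

definition matching :: "'a set \<Rightarrow> 'a set set \<Rightarrow> bool" where
  "matching V M \<longleftrightarrow>
     (\<forall>e\<in>M. \<exists>x y. e = {x, y} \<and> x \<noteq> y \<and> x \<in> V \<and> y \<in> V) \<and>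
     (\<forall>e\<in>M. \<forall>e'\<in>M. e \<noteq> e' \<longrightarrow> e \<inter> e' = {})"

definition disagreement :: "'a set set \<Rightarrow> 'a set set \<Rightarrow> 'a set set" where
  "disagreement Mt Mc = (Mt \<union> Mc) - (Mt \<inter> Mc)"

text \<open>A component is listed as a sequence of agents (v_1, ..., v_(k+1));
its edges are e_j = {v_j, v_(j+1)}. In Isabelle lists are 0-indexed, so
agent v_j is vs ! (j-1) and edge e_j is edge vs (j-1).\<close>
definition edge :: "'a list \<Rightarrow> nat \<Rightarrow> 'a set" where
  "edge vs j = {vs ! j, vs ! Suc j}"

definition walk_edges :: "'a list \<Rightarrow> 'a set set" where
  "walk_edges vs = {edge vs j | j. Suc j < length vs}"

definition comp_len :: "'a list \<Rightarrow> nat" where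
  "comp_len vs = length vs - 1"

definition is_cycle :: "'a list \<Rightarrow> bool" where
  "is_cycle vs \<longleftrightarrow> hd vs = last vs"

definition alternating_comp :: "'a set set \<Rightarrow> 'a set set \<Rightarrow> 'a list \<Rightarrow> bool" where
  "alternating_comp Mt Mc vs \<longleftrightarrow>
     length vs \<ge> 2 \<and>
     (if is_cycle vs then distinct (butlast vs) else distinct vs) \<and>
     ((\<forall>j. Suc j < length vs \<longrightarrow>
          (even j \<longrightarrow> edge vs j \<in> Mt - Mc) \<and> (odd j \<longrightarrow> edge vs j \<in> Mc - Mt)) \<or>
      (\<forall>j. Suc j < length vs \<longrightarrow>
          (even j \<longrightarrow> edge vs j \<in> Mc - Mt) \<and> (odd j \<longrightarrow> edge vs j \<in> Mt - Mc)))"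

text \<open>Ps = [P_1, ..., P_m] (0-indexed) is the decomposition of the disagreement
set into its connected components: each is an alternating path/cycle, they are
pairwise vertex-disjoint, and together their edges are exactly the disagreement set.\<close>
definition component_decomposition ::
  "'a set set \<Rightarrow> 'a set set \<Rightarrow> 'a list list \<Rightarrow> bool" where
  "component_decomposition Mt Mc Ps \<longleftrightarrow>
     (\<forall>i < length Ps. alternating_comp Mt Mc (Ps ! i)) \<and>
     (\<forall>i < length Ps. \<forall>i' < length Ps. i \<noteq> i' \<longrightarrow> set (Ps ! i) \<inter> set (Ps ! i') = {}) \<and>
     (\<Union>i < length Ps. walk_edges (Ps ! i)) = disagreement Mt Mc"

fun chain :: "real \<Rightarrow> nat \<Rightarrow> bool \<Rightarrow> bool list pmf" where
  "chain p 0 b = return_pmf []"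
| "chain p (Suc n) b =
     do { x \<leftarrow> (if b then return_pmf False else bernoulli_pmf p);
          xs \<leftarrow> chain p n x;
          return_pmf (x # xs) }"

definition path_design :: "real \<Rightarrow> nat \<Rightarrow> bool list pmf" where
  "path_design p k =
     (if k = 0 then return_pmf []
      else do { w1 \<leftarrow> bernoulli_pmf (p / (1 + p));
                ws \<leftarrow> chain p (k - 1) w1;
                return_pmf (w1 # ws) })"

definition cycle_design :: "real \<Rightarrow> nat \<Rightarrow> bool list pmf" where
  "cycle_design p k =
     do { w1 \<leftarrow> bernoulli_pmf (p / (1 + p));
          ws \<leftarrow> chain p (k - 2) w1;
          return_pmf (w1 # ws @ [\<not> w1 \<and> \<not> last (w1 # ws)]) }"

definition comp_design :: "real \<Rightarrow> 'a list \<Rightarrow> bool list pmf" where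
  "comp_design p vs =
     (if is_cycle vs then cycle_design p (comp_len vs) else path_design p (comp_len vs))"

definition apr_design :: "real \<Rightarrow> 'a list list \<Rightarrow> (nat \<Rightarrow> bool list) pmf" where
  "apr_design p Ps = Pi_pmf {..<length Ps} [] (\<lambda>i. comp_design p (Ps ! i))"

text \<open>W_{i,j} for j in 1..k(i) (component index i is 0-based).\<close>
definition W_ind :: "(nat \<Rightarrow> bool list) \<Rightarrow> nat \<Rightarrow> nat \<Rightarrow> bool" where
  "W_ind W i j = W i ! (j - 1)"

end

theory Submission
  imports Defs
begin

lemma measure_bind_pmf':
  "measure_pmf.prob (bind_pmf M N) X = (\<integral>x. measure_pmf.prob (N x) X \<partial>M)"
proof -
  have "emeasure (measure_pmf (bind_pmf M N)) X = (\<integral>\<^sup>+x. ennreal (measure_pmf.prob (N x) X) \<partial>M)"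
    by (subst emeasure_bind_pmf) (simp add: measure_pmf.emeasure_eq_measure)
  also have "\<dots> = ennreal (\<integral>x. measure_pmf.prob (N x) X \<partial>M)"
    by (intro nn_integral_eq_integral measure_pmf.integrable_const_bound[where B=1]) auto
  finally show ?thesis
    by (simp add: measure_pmf.emeasure_eq_measure)
qed

lemma chain_len: "xs \<in> set_pmf (chain p n b) \<Longrightarrow> length xs = n"
  by (induction n arbitrary: b xs) (auto split: if_splits)

lemma chain_nth:
  assumes p: "0 < p" "p < 1" and "j \<le> n"
  shows "measure_pmf.prob (chain p n b) {xs. (b # xs) ! j} =
         (p + (-p) ^ (j + (if b then 0 else 1))) / (1 + p)"
  using assms(3)
proof (induction n arbitrary: b j)
  case 0
  then show ?case using p by (auto simp: field_simps)
next
  case (Suc n)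
  show ?case
  proof (cases j)
    case 0
    then show ?thesis using p by (auto simp: field_simps)
  next
    case (Suc j')
    with Suc.prems have j': "j' \<le> n" by simp
    have eq: "\<And>x. measure_pmf.prob (chain p n x \<bind> (\<lambda>xs. return_pmf (x # xs))) {xs. (b # xs) ! j}
       = measure_pmf.prob (chain p n x) {xs. (x # xs) ! j'}"
      by (simp only: map_pmf_def[symmetric] measure_map_pmf) (simp add: Suc vimage_def)
    have step: "measure_pmf.prob (chain p (Suc n) b) {xs. (b#xs)!j} =
       (\<integral>x. measure_pmf.prob (chain p n x) {xs. (x#xs)!j'} \<partial>(if b then return_pmf False else bernoulli_pmf p))"
      by (simp only: chain.simps measure_bind_pmf'[of "if b then _ else _"] eq)
    show ?thesis
    proof (cases b)
      case True
      then show ?thesis using j' Suc.IH[of j' False] Suc step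
        by simp
    next
      case False
      then have "measure_pmf.prob (chain p (Suc n) b) {xs. (b # xs) ! j} =
        p * measure_pmf.prob (chain p n True) {xs. (True#xs)!j'} + (1 - p) * measure_pmf.prob (chain p n False) {xs. (False#xs)!j'}"
        using p step by (simp add: algebra_simps)
      also have "\<dots> = p * ((p + (-p) ^ j') / (1 + p)) + (1 - p) * ((p + (-p) ^ (j' + 1)) / (1 + p))"
        using j' Suc.IH[of j' False] Suc.IH[of j' True] by simp
      also have "\<dots> = (p + (-p) ^ (j + 1)) / (1 + p)"
      proof -
        define t where "t = (-p) ^ j'"
        have e1: "(-p) ^ (j' + 1) = - p * t" and e2: "(-p) ^ (j + 1) = p * p * t"
          by (simp_all add: t_def Suc)
        have "p * ((p + t) / (1 + p)) + (1 - p) * ((p + - p * t) / (1 + p)) = (p + p * p * t) / (1 + p)"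
        proof -
          have "p * (p + t) + (1 - p) * (p + - p * t) = p + p * p * t" by algebra
          moreover have "\<And>a b c::real. p*(a/c) + (1-p)*(b/c) = (p*a+(1-p)*b)/c"
            by (simp add: add_divide_distrib)
          ultimately show ?thesis by metis
        qed
        then show ?thesis by (simp only: e1 e2 t_def[symmetric])
      qed
      finally show ?thesis using False by simp
    qed
  qed
qed

lemma bern_bind:
  assumes "0 \<le> q" "q \<le> 1"
  shows "measure_pmf.prob (bind_pmf (bernoulli_pmf q) (\<lambda>w. bind_pmf (N w) (\<lambda>ws. return_pmf (f w ws)))) A
    = q * measure_pmf.prob (N True) {ws. f True ws \<in> A} + (1 - q) * measure_pmf.prob (N False) {ws. f False ws \<in> A}"
  using assms by (simp only: map_pmf_def[symmetric] measure_bind_pmf') (simp add: vimage_def)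

lemma prob_not: "measure_pmf.prob M {x. \<not> P x} = 1 - measure_pmf.prob M {x. P x}"
proof -
  have "{x. \<not> P x} = space (measure_pmf M) - {x. P x}" by auto
  then show ?thesis using measure_pmf.prob_compl[of "{x. P x}" M] by simp
qed

lemma cyc_len:
  assumes "matching V Mt" "matching V Mc" "alternating_comp Mt Mc vs" "is_cycle vs"
  shows "2 \<le> comp_len vs"
proof (rule ccontr)
  assume "\<not> ?thesis"
  with assms(3) have l: "length vs = 2" by (auto simp: alternating_comp_def comp_len_def)
  then obtain a b where vs: "vs = [a, b]"
    using l by (auto simp: length_Suc_conv numeral_2_eq_2)
  with assms(4) have "a = b" by (simp add: is_cycle_def)
  have "edge vs 0 \<in> Mt \<or> edge vs 0 \<in> Mc" using assms(3) l by (auto simp: alternating_comp_def)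
  moreover have "edge vs 0 = {a}" using vs \<open>a = b\<close> by (simp add: edge_def)
  moreover have "\<And>M. matching V M \<Longrightarrow> {a} \<notin> M"
  proof
    fix M assume "matching V M" "{a} \<in> M"
    then obtain x y where "{a} = {x, y}" "x \<noteq> y" unfolding matching_def by blast
    then show False by (metis insert_absorb insert_iff singleton_insert_inj_eq)
  qed
  ultimately show False using assms(1,2) by metis
qed

lemma prob_cong:
  assumes "\<And>x. x \<in> set_pmf M \<Longrightarrow> x \<in> A \<longleftrightarrow> x \<in> B"
  shows "measure_pmf.prob M A = measure_pmf.prob M B"
proof -
  have "A \<inter> set_pmf M = B \<inter> set_pmf M" using assms by auto
  then show ?thesis by (metis measure_Int_set_pmf)
qed

lemma arith1:
  assumes p: "0 < (p::real)"
  shows "p / (1 + p) * ((p + (-p) ^ m) / (1 + p)) + (1 - p / (1 + p)) * ((p + (-p) ^ (m + 1)) / (1 + p)) = p / (p + 1)"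
proof -
  define t where "t = (-p) ^ m"
  have e: "(-p) ^ (m + 1) = - p * t" by (simp add: t_def)
  have ne: "1 + p \<noteq> 0" using p by simp
  have "p / (1 + p) * ((p + t) / (1 + p)) + (1 - p / (1 + p)) * ((p + - p * t) / (1 + p))
      = (p * (p + t) + (p + - p * t)) / ((1 + p) * (1 + p))"
    using ne by (simp add: field_simps) (simp only: add_divide_distrib[symmetric], simp add: algebra_simps)
  also have "\<dots> = p * (1 + p) / ((1 + p) * (1 + p))" by (simp add: algebra_simps)
  also have "\<dots> = p / (p + 1)" using ne by (simp add: add.commute)
  finally show ?thesis by (simp only: e t_def[symmetric])
qed

lemma arith2:
  assumes p: "0 < (p::real)"
  shows "(1 - p / (1 + p)) * (1 - (p + (-p) ^ m) / (1 + p)) = (1 - (-p) ^ m) / (1 + p)\<^sup>2"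
proof -
  have ne: "1 + p \<noteq> 0" using p by simp
  show ?thesis using ne by (simp add: field_simps power2_eq_square)
qed

lemma path_prob:
  assumes p: "0 < p" "p < 1" and j: "1 \<le> j" "j \<le> k"
  shows "measure_pmf.prob (path_design p k) {ws. ws ! (j - 1)} = p / (p + 1)"
proof -
  have q: "0 \<le> p / (1 + p)" "p / (1 + p) \<le> 1" using p by auto
  have "measure_pmf.prob (path_design p k) {ws. ws ! (j - 1)} =
     p / (1 + p) * measure_pmf.prob (chain p (k - 1) True) {xs. (True # xs) ! (j - 1)}
     + (1 - p / (1 + p)) * measure_pmf.prob (chain p (k - 1) False) {xs. (False # xs) ! (j - 1)}"
    using j by (simp add: path_design_def bern_bind[OF q])
  also have "\<dots> = p / (1 + p) * ((p + (-p) ^ (j - 1)) / (1 + p)) + (1 - p / (1 + p)) * ((p + (-p) ^ (j - 1 + 1)) / (1 + p))"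
    using j by (simp add: chain_nth[OF p])
  also have "\<dots> = p / (p + 1)" by (rule arith1[OF p(1)])
  finally show ?thesis .
qed

lemma cycle_prob1:
  assumes p: "0 < p" "p < 1" and j: "1 \<le> j" "j < k"
  shows "measure_pmf.prob (cycle_design p k) {ws. ws ! (j - 1)} = p / (p + 1)"
proof -
  have q: "0 \<le> p / (1 + p)" "p / (1 + p) \<le> 1" using p by auto
  have ev: "measure_pmf.prob (chain p (k - 2) b) {ws. (b # ws @ [c ws]) ! (j - 1)} =
            measure_pmf.prob (chain p (k - 2) b) {ws. (b # ws) ! (j - 1)}" for b c
  proof (rule prob_cong)
    fix ws assume "ws \<in> set_pmf (chain p (k - 2) b)"
    then have "length ws = k - 2" by (rule chain_len)
    then show "(ws \<in> {ws. (b # ws @ [c ws]) ! (j - 1)}) = (ws \<in> {ws. (b # ws) ! (j - 1)})"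
    proof -
      have "j - 1 < length (b # ws)" using j \<open>length ws = k - 2\<close> by simp
      then have "((b # ws) @ [c ws]) ! (j - 1) = (b # ws) ! (j - 1)" by (rule nth_append_left)
      then show ?thesis by simp
    qed
  qed
  have "measure_pmf.prob (cycle_design p k) {ws. ws ! (j - 1)} =
     p / (1 + p) * measure_pmf.prob (chain p (k - 2) True) {xs. (True # xs) ! (j - 1)}
     + (1 - p / (1 + p)) * measure_pmf.prob (chain p (k - 2) False) {xs. (False # xs) ! (j - 1)}"
    unfolding cycle_design_def bern_bind[OF q] mem_Collect_eq ev by (rule refl)
  also have "\<dots> = p / (1 + p) * ((p + (-p) ^ (j - 1)) / (1 + p)) + (1 - p / (1 + p)) * ((p + (-p) ^ (j - 1 + 1)) / (1 + p))"
    using j by (simp add: chain_nth[OF p])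
  also have "\<dots> = p / (p + 1)" by (rule arith1[OF p(1)])
  finally show ?thesis .
qed

lemma cycle_prob2:
  assumes p: "0 < p" "p < 1" and k: "2 \<le> k"
  shows "measure_pmf.prob (cycle_design p k) {ws. ws ! (k - 1)} = (1 - (- p) ^ (k - 1)) / (1 + p)\<^sup>2"
proof -
  have q: "0 \<le> p / (1 + p)" "p / (1 + p) \<le> 1" using p by auto
  have ev: "measure_pmf.prob (chain p (k - 2) b) {ws. (b # ws @ [\<not> b \<and> \<not> last (b # ws)]) ! (k - 1)} =
            measure_pmf.prob (chain p (k - 2) b) {ws. \<not> b \<and> \<not> (b # ws) ! (k - 2)}" for b
  proof (rule prob_cong)
    fix ws assume "ws \<in> set_pmf (chain p (k - 2) b)"
    then have l: "length ws = k - 2" by (rule chain_len)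
    have "last (b # ws) = (b # ws) ! (length (b # ws) - 1)" by (rule last_conv_nth) simp
    then have "last (b # ws) = (b # ws) ! (k - 2)" using l k by simp
    moreover have "(b # ws @ [x]) ! (k - 1) = x" for x
    proof -
      have "((b # ws) @ [x]) ! (length (b # ws)) = x" by (rule nth_append_length)
      moreover have "length (b # ws) = k - 1" using l k by simp
      ultimately show ?thesis by (metis append_Cons)
    qed
    ultimately show "(ws \<in> {ws. (b # ws @ [\<not> b \<and> \<not> last (b # ws)]) ! (k - 1)}) = (ws \<in> {ws. \<not> b \<and> \<not> (b # ws) ! (k - 2)})"
      by simp
  qed
  have "measure_pmf.prob (cycle_design p k) {ws. ws ! (k - 1)} =
     (1 - p / (1 + p)) * measure_pmf.prob (chain p (k - 2) False) {xs. \<not> (False # xs) ! (k - 2)}"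
    unfolding cycle_design_def bern_bind[OF q] mem_Collect_eq ev by simp
  also have "\<dots> = (1 - p / (1 + p)) * (1 - (p + (-p) ^ (k - 2 + 1)) / (1 + p))"
    by (simp add: prob_not chain_nth[OF p])
  also have "\<dots> = (1 - (- p) ^ (k - 1)) / (1 + p)\<^sup>2"
  proof -
    have e: "k - 2 + 1 = k - 1" using k by simp
    show ?thesis unfolding e by (rule arith2[OF p(1)])
  qed
  finally show ?thesis .
qed

theorem lemma1:
  fixes p :: real and V :: "'a set" and N :: nat
    and Mt Mc :: "'a set set" and Ps :: "'a list list" and i j :: nat
  assumes "0 < p" and "p < 1"
    and "finite V" and "card V = 2 * N"
    and "matching V Mt" and "matching V Mc"
    and "component_decomposition Mt Mc Ps"
    and "i < length Ps"
    and "1 \<le> j" and "j \<le> comp_len (Ps ! i)"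
  shows "measure_pmf.prob (apr_design p Ps) {W. W_ind W i j} =
           (if is_cycle (Ps ! i) \<and> j = comp_len (Ps ! i)
            then (1 - (- p) ^ (j - 1)) / (1 + p)\<^sup>2
            else p / (p + 1))"
proof -
  have alt: "alternating_comp Mt Mc (Ps ! i)" using assms(7,8) by (simp add: component_decomposition_def)
  have "measure_pmf.prob (apr_design p Ps) {W. W_ind W i j} =
        measure_pmf.prob (map_pmf (\<lambda>f. f i) (apr_design p Ps)) {ws. ws ! (j - 1)}"
    by (simp add: W_ind_def vimage_def)
  also have "map_pmf (\<lambda>f. f i) (apr_design p Ps) = comp_design p (Ps ! i)"
    unfolding apr_design_def using assms(8) by (subst Pi_pmf_component) auto
  finally have eq: "measure_pmf.prob (apr_design p Ps) {W. W_ind W i j} =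
     measure_pmf.prob (comp_design p (Ps ! i)) {ws. ws ! (j - 1)}" .
  show ?thesis
  proof (cases "is_cycle (Ps ! i)")
    case True
    have k: "2 \<le> comp_len (Ps ! i)" by (rule cyc_len[OF assms(5,6) alt True])
    show ?thesis
    proof (cases "j = comp_len (Ps ! i)")
      case True2: True
      then show ?thesis using eq True cycle_prob2[OF assms(1,2) k]
        by (simp add: comp_design_def)
    next
      case False
      then have "j < comp_len (Ps ! i)" using assms(10) by simp
      then show ?thesis using eq True False cycle_prob1[OF assms(1,2) assms(9)]
        by (simp add: comp_design_def)
    qed
  next
    case False
    then show ?thesis using eq path_prob[OF assms(1,2,9,10)]
      by (simp add: comp_design_def)
  qed
qed

end
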